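(* Let $\Gamma$ be a connected rooted Eisenbud–Neumann diagram satisfying: (a) all near weights are positive and no far weight is zero; (b) if the far weight at a node $v$ is negative then the far weights at all nodes beyond $v$ are negative; (c) all vertex multiplicities are positive. If $\Gamma$ has $\nu\ge2$ arrowheads $L_1,\dots,L_\nu$, then $\mathrm{lk}(L_i,L_i)<0$ for every $i$.
   Context: A rooted Eisenbud–Neumann (splice) diagram is a finite tree with a distinguished root vertex, whose vertices are nodes, leaves (valency one, not arrowheads) and arrowhead vertices $L_1,\dots,L_\nu$ carrying multiplicities $n_1,\dots,n_\nu$; at each node every incident edge carries a weight at that node (omitted weights equal $1$). At a node $v$, the weight on the edge leading from $v$ towards the root is the far weight at $v$; the weights at $v$ on the other incident edges are near weights at $v$. A node $w$ is beyond a node $v$ if the geodesic from $w$ to the root contains $v$. For distinct vertices $v,w$ (nodes or arrowheads), $\mathrm{lk}(v,w)$ is the product of all edge weights adjacent to but not on the geodesic between $v$ and $w$. The multiplicity of a non-arrowhead vertex $v$ is $M_v=\sum_j n_j\,\mathrm{lk}(v,L_j)$; the multiplicity of $L_j$ is $n_j$. The self-linking $\mathrm{lk}(L_i,L_i)$ is defined by $n_i\,\mathrm{lk}(L_i,L_i)=-\sum_{j\ne i}n_j\,\mathrm{lk}(L_i,L_j)$. *)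

theory Defs
  imports Main Complex_Main
begin

(* A diagram is given by a finite vertex set V, a symmetric irreflexive adjacency
   relation E, a root rt, a set A of arrowhead vertices, weights wt (wt u x is the
   weight at the node u on the edge {u,x}) and arrowhead multiplicities n. *)

definition nbrs :: "('v \<Rightarrow> 'v \<Rightarrow> bool) \<Rightarrow> 'v \<Rightarrow> 'v set" where
  "nbrs E v = {u. E v u}"

definition valency :: "('v \<Rightarrow> 'v \<Rightarrow> bool) \<Rightarrow> 'v \<Rightarrow> nat" where
  "valency E v = card (nbrs E v)"

definition is_path :: "'v set \<Rightarrow> ('v \<Rightarrow> 'v \<Rightarrow> bool) \<Rightarrow> 'v list \<Rightarrow> 'v \<Rightarrow> 'v \<Rightarrow> bool" where
  "is_path V E xs v w \<longleftrightarrow> xs \<noteq> [] \<and> hd xs = v \<and> last xs = w \<and> distinct xs \<and> set xs \<subseteq> V \<and>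
     (\<forall>i. Suc i < length xs \<longrightarrow> E (xs ! i) (xs ! Suc i))"

(* finite tree: nonempty, simple undirected graph, any two vertices joined by a unique simple path
   (this encodes connected + acyclic) *)
definition is_tree :: "'v set \<Rightarrow> ('v \<Rightarrow> 'v \<Rightarrow> bool) \<Rightarrow> bool" where
  "is_tree V E \<longleftrightarrow> finite V \<and> V \<noteq> {} \<and>
     (\<forall>u v. E u v \<longrightarrow> u \<in> V \<and> v \<in> V \<and> u \<noteq> v \<and> E v u) \<and>
     (\<forall>v\<in>V. \<forall>w\<in>V. \<exists>!xs. is_path V E xs v w)"

definition geod :: "'v set \<Rightarrow> ('v \<Rightarrow> 'v \<Rightarrow> bool) \<Rightarrow> 'v \<Rightarrow> 'v \<Rightarrow> 'v list" where
  "geod V E v w = (THE xs. is_path V E xs v w)"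

definition path_edge :: "'v list \<Rightarrow> 'v \<Rightarrow> 'v \<Rightarrow> bool" where
  "path_edge xs u x \<longleftrightarrow> (\<exists>i. Suc i < length xs \<and>
     ((xs ! i = u \<and> xs ! Suc i = x) \<or> (xs ! i = x \<and> xs ! Suc i = u)))"

definition EN_diagram :: "'v set \<Rightarrow> ('v \<Rightarrow> 'v \<Rightarrow> bool) \<Rightarrow> 'v \<Rightarrow> 'v set \<Rightarrow> bool" where
  "EN_diagram V E rt A \<longleftrightarrow> is_tree V E \<and> rt \<in> V \<and> A \<subseteq> V \<and> (\<forall>a\<in>A. valency E a = 1)"

definition is_leaf :: "'v set \<Rightarrow> ('v \<Rightarrow> 'v \<Rightarrow> bool) \<Rightarrow> 'v set \<Rightarrow> 'v \<Rightarrow> bool" where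
  "is_leaf V E A v \<longleftrightarrow> v \<in> V \<and> v \<notin> A \<and> valency E v = 1"

definition is_node :: "'v set \<Rightarrow> ('v \<Rightarrow> 'v \<Rightarrow> bool) \<Rightarrow> 'v set \<Rightarrow> 'v \<Rightarrow> bool" where
  "is_node V E A v \<longleftrightarrow> v \<in> V \<and> v \<notin> A \<and> valency E v \<noteq> 1"

(* the neighbour of v in the direction of the root (v \<noteq> rt) *)
definition far_nb :: "'v set \<Rightarrow> ('v \<Rightarrow> 'v \<Rightarrow> bool) \<Rightarrow> 'v \<Rightarrow> 'v \<Rightarrow> 'v" where
  "far_nb V E rt v = geod V E v rt ! 1"

definition is_far_edge :: "'v set \<Rightarrow> ('v \<Rightarrow> 'v \<Rightarrow> bool) \<Rightarrow> 'v \<Rightarrow> 'v \<Rightarrow> 'v \<Rightarrow> bool" where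
  "is_far_edge V E rt v x \<longleftrightarrow> v \<noteq> rt \<and> x = far_nb V E rt v"

definition far_weight :: "'v set \<Rightarrow> ('v \<Rightarrow> 'v \<Rightarrow> bool) \<Rightarrow> 'v \<Rightarrow> ('v \<Rightarrow> 'v \<Rightarrow> int) \<Rightarrow> 'v \<Rightarrow> int" where
  "far_weight V E rt wt v = wt v (far_nb V E rt v)"

definition beyond :: "'v set \<Rightarrow> ('v \<Rightarrow> 'v \<Rightarrow> bool) \<Rightarrow> 'v \<Rightarrow> 'v \<Rightarrow> 'v \<Rightarrow> bool" where
  "beyond V E rt w v \<longleftrightarrow> v \<in> set (geod V E w rt)"

definition lk :: "'v set \<Rightarrow> ('v \<Rightarrow> 'v \<Rightarrow> bool) \<Rightarrow> 'v set \<Rightarrow> ('v \<Rightarrow> 'v \<Rightarrow> int) \<Rightarrow> 'v \<Rightarrow> 'v \<Rightarrow> int" where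
  "lk V E A wt v w =
     (\<Prod>u \<in> {u \<in> set (geod V E v w). is_node V E A u}.
        \<Prod>x \<in> {x. E u x \<and> \<not> path_edge (geod V E v w) u x}. wt u x)"

definition mult :: "'v set \<Rightarrow> ('v \<Rightarrow> 'v \<Rightarrow> bool) \<Rightarrow> 'v set \<Rightarrow> ('v \<Rightarrow> 'v \<Rightarrow> int) \<Rightarrow> ('v \<Rightarrow> int) \<Rightarrow> 'v \<Rightarrow> int" where
  "mult V E A wt n v = (if v \<in> A then n v else (\<Sum>j\<in>A. n j * lk V E A wt v j))"

definition self_lk :: "'v set \<Rightarrow> ('v \<Rightarrow> 'v \<Rightarrow> bool) \<Rightarrow> 'v set \<Rightarrow> ('v \<Rightarrow> 'v \<Rightarrow> int) \<Rightarrow> ('v \<Rightarrow> int) \<Rightarrow> 'v \<Rightarrow> real" where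
  "self_lk V E A wt n i = - real_of_int (\<Sum>j\<in>A - {i}. n j * lk V E A wt i j) / real_of_int (n i)"

end

theory Submission imports Defs begin
lemma path_ends: "is_path V E xs v w \<Longrightarrow> v \<in> V \<and> w \<in> V"
  unfolding is_path_def by (meson hd_in_set last_in_set subsetD)

lemma geod_path: "is_tree V E \<Longrightarrow> v \<in> V \<Longrightarrow> w \<in> V \<Longrightarrow> is_path V E (geod V E v w) v w"
  unfolding geod_def is_tree_def by (metis theI')

lemma geod_eq: "is_tree V E \<Longrightarrow> is_path V E xs v w \<Longrightarrow> geod V E v w = xs"
proof -
  assume t: "is_tree V E" and p: "is_path V E xs v w"
  then have vw: "v \<in> V" "w \<in> V" using path_ends by metis+
  then have "is_path V E (geod V E v w) v w" using geod_path t by metis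
  moreover have "\<exists>!xs. is_path V E xs v w" using t vw unfolding is_tree_def by metis
  ultimately show ?thesis using p by metis
qed

lemma path_single: "v \<in> V \<Longrightarrow> is_path V E [v] v v"
  unfolding is_path_def by auto

lemma tree_E: "is_tree V E \<Longrightarrow> E u v \<Longrightarrow> u \<in> V \<and> v \<in> V \<and> u \<noteq> v \<and> E v u"
  unfolding is_tree_def by metis

lemma path_two: "is_tree V E \<Longrightarrow> E a b \<Longrightarrow> is_path V E [a,b] a b"
  using tree_E[of V E a b] unfolding is_path_def by (auto simp: less_Suc_eq)

lemma path_rev: "is_tree V E \<Longrightarrow> is_path V E xs v w \<Longrightarrow> is_path V E (rev xs) w v"
proof -
  assume t: "is_tree V E" and p: "is_path V E xs v w"
  have e: "\<forall>i. Suc i < length xs \<longrightarrow> E (xs ! i) (xs ! Suc i)" using p unfolding is_path_def by simp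
  have "E (rev xs ! i) (rev xs ! Suc i)" if i: "Suc i < length xs" for i
  proof -
    define j where "j = length xs - Suc (Suc i)"
    have j: "Suc j < length xs" using i unfolding j_def by simp
    have "rev xs ! i = xs ! Suc j" "rev xs ! Suc i = xs ! j" using i unfolding j_def
      by (auto simp: rev_nth Suc_diff_Suc)
    then show ?thesis using e j tree_E[OF t] by metis
  qed
  then show ?thesis using p unfolding is_path_def by (auto simp: hd_rev last_rev)
qed

lemma path_take: "is_path V E xs v w \<Longrightarrow> k < length xs \<Longrightarrow> is_path V E (take (Suc k) xs) v (xs ! k)"
  unfolding is_path_def
  apply (intro conjI)
  apply simp
  apply (metis hd_take take_eq_Nil2 zero_less_Suc)
  apply (simp add: last_conv_nth)
  apply simp
  apply (meson in_set_takeD subset_iff)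
  apply simp
  done

lemma path_drop: "is_path V E xs v w \<Longrightarrow> k < length xs \<Longrightarrow> is_path V E (drop k xs) (xs ! k) w"
  unfolding is_path_def
  apply (intro conjI)
  apply simp
  apply (simp add: hd_drop_conv_nth)
  apply simp
  apply simp
  apply (meson in_set_dropD subset_iff)
  apply (simp add: less_diff_conv)
  done

lemma path_app: "is_path V E xs a b \<Longrightarrow> is_path V E ys b c \<Longrightarrow> set xs \<inter> set ys \<subseteq> {b}
   \<Longrightarrow> is_path V E (xs @ tl ys) a c"
proof -
  assume p1: "is_path V E xs a b" and p2: "is_path V E ys b c" and d: "set xs \<inter> set ys \<subseteq> {b}"
  have ys: "ys = b # tl ys" using p2 unfolding is_path_def by (metis list.collapse)
  have xs: "last xs = b" "xs \<noteq> []" "hd xs = a" using p1 unfolding is_path_def by auto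
  have stl: "set (tl ys) \<subseteq> set ys" by (metis list.set_sel(2) subsetI tl_Nil)
  have "b \<notin> set (tl ys)" using p2 ys unfolding is_path_def by (metis distinct.simps(2))
  then have "set xs \<inter> set (tl ys) = {}" using d stl by auto
  then have dist: "distinct (xs @ tl ys)" using p1 p2 unfolding is_path_def
    by (simp add: distinct_tl)
  have edges: "\<forall>i. Suc i < length (xs @ tl ys) \<longrightarrow> E ((xs @ tl ys) ! i) ((xs @ tl ys) ! Suc i)"
  proof (intro allI impI)
    fix i assume i: "Suc i < length (xs @ tl ys)"
    consider "Suc i < length xs" | "Suc i = length xs" | "Suc i > length xs" by linarith
    then show "E ((xs @ tl ys) ! i) ((xs @ tl ys) ! Suc i)"
    proof cases
      case 1 then show ?thesis using p1 unfolding is_path_def by (simp add: nth_append)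
    next
      case 2
      then have "i = length xs - 1" by simp
      then have "(xs @ tl ys) ! i = b" using xs 2 by (simp add: nth_append last_conv_nth)
      moreover have "(xs @ tl ys) ! Suc i = ys ! 1" using 2 i by (simp add: nth_append nth_tl)
      moreover have "E (ys ! 0) (ys ! 1)" using p2 i 2 unfolding is_path_def by (simp add: nth_tl)
      ultimately show ?thesis using ys by (metis nth_Cons_0)
    next
      case 3
      then have "(xs @ tl ys) ! i = ys ! (Suc (i - length xs))" "(xs @ tl ys) ! Suc i = ys ! (Suc (Suc (i - length xs)))"
        using i by (auto simp: nth_append nth_tl Suc_diff_le)
      moreover have "Suc (Suc (i - length xs)) < length ys" using i 3 by auto
      ultimately show ?thesis using p2 unfolding is_path_def by auto
    qed
  qed
  have "last (xs @ tl ys) = c"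
  proof (cases "tl ys = []")
    case True then show ?thesis using p2 xs ys unfolding is_path_def by (metis append.right_neutral last_ConsL)
  next
    case False then show ?thesis using p2 unfolding is_path_def by (simp add: last_tl)
  qed
  moreover have "set (xs @ tl ys) \<subseteq> V" using p1 p2 stl unfolding is_path_def by auto
  ultimately show ?thesis using dist edges xs unfolding is_path_def by simp
qed

lemma path_len2: "is_path V E Q x r \<Longrightarrow> x \<noteq> r \<Longrightarrow> length Q \<ge> 2"
  unfolding is_path_def
  by (metis One_nat_def Suc_1 hd_conv_nth last_conv_nth le_SucE le_zero_eq length_0_conv not_less_eq_eq diff_Suc_1)

lemma beyond_aux:
  assumes t: "is_tree V E" and P: "is_path V E P a b" and k: "k < length P" and m: "m \<le> k"
    and xrt: "P ! k \<noteq> rt" and rtV: "rt \<in> V"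
    and ne: "\<not> path_edge P (P ! k) (geod V E (P ! k) rt ! 1)"
  shows "P ! k \<in> set (geod V E (P ! m) rt)"
proof -
  define x where "x = P ! k"
  have xV: "x \<in> V" using P k unfolding x_def is_path_def by (meson nth_mem subsetD)
  define Q where "Q = geod V E x rt"
  have Q: "is_path V E Q x rt" unfolding Q_def using geod_path[OF t xV rtV] .
  have lQ: "length Q \<ge> 2" using path_len2[OF Q] xrt x_def by simp
  define S where "S = drop m (take (Suc k) P)"
  have Pt: "is_path V E (take (Suc k) P) a x" using path_take[OF P k] x_def by simp
  have S: "is_path V E S (P ! m) x" unfolding S_def using path_drop[OF Pt, of m] m k by simp
  have lS: "length S = Suc k - m" unfolding S_def using k by simp
  have Snth: "\<And>s. s < length S \<Longrightarrow> S ! s = P ! (m + s)" unfolding S_def using k m by simp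
  have disj: "set S \<inter> set Q \<subseteq> {x}"
  proof
    fix z assume z: "z \<in> set S \<inter> set Q"
    show "z \<in> {x}"
    proof (rule ccontr)
      assume zx: "z \<notin> {x}"
      obtain q where q: "q < length Q" "Q ! q = z" using z by (meson IntD2 in_set_conv_nth)
      obtain s where s: "s < length S" "S ! s = z" using z by (meson IntD1 in_set_conv_nth)
      have q0: "q \<noteq> 0" using q zx Q unfolding is_path_def by (metis hd_conv_nth insertI1)
      have sl: "s \<noteq> length S - 1" using s zx S unfolding is_path_def by (metis last_conv_nth insertI1)
      have p1: "is_path V E (take (Suc q) Q) x z" using path_take[OF Q q(1)] q by simp
      have p2: "is_path V E (rev (drop s S)) x z" using path_rev[OF t path_drop[OF S s(1)]] s by simp
      have eq: "take (Suc q) Q = rev (drop s S)" using geod_eq[OF t p1] geod_eq[OF t p2] by simp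
      have "take (Suc q) Q ! 1 = Q ! 1" using q0 by simp
      moreover have "rev (drop s S) ! 1 = S ! (length S - 2)"
        using s sl by (simp add: rev_nth)
      moreover have "S ! (length S - 2) = P ! (k - 1)" using Snth[of "length S - 2"] lS s sl by simp
      ultimately have y: "Q ! 1 = P ! (k - 1)" using eq by simp
      have "k \<ge> 1" using lS s sl by simp
      then have "path_edge P x (Q ! 1)" unfolding path_edge_def x_def using y k
        by (intro exI[of _ "k - 1"]) simp
      then show False using ne unfolding x_def Q_def by simp
    qed
  qed
  have "is_path V E (S @ tl Q) (P ! m) rt" using path_app[OF S Q disj] .
  then have "geod V E (P ! m) rt = S @ tl Q" using geod_eq[OF t] by simp
  moreover have "x \<in> set S" using S unfolding is_path_def by (metis last_in_set)
  ultimately show ?thesis unfolding x_def by simp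
qed

lemma pe_cons: "path_edge (a # xs) x y \<longleftrightarrow>
   (xs \<noteq> [] \<and> ((a = x \<and> hd xs = y) \<or> (a = y \<and> hd xs = x))) \<or> path_edge xs x y"
proof
  assume "path_edge (a # xs) x y"
  then obtain i where i: "Suc i < length (a # xs)"
     "((a # xs) ! i = x \<and> (a # xs) ! Suc i = y) \<or> ((a # xs) ! i = y \<and> (a # xs) ! Suc i = x)"
    unfolding path_edge_def by blast
  show "(xs \<noteq> [] \<and> ((a = x \<and> hd xs = y) \<or> (a = y \<and> hd xs = x))) \<or> path_edge xs x y"
  proof (cases i)
    case 0 then show ?thesis using i by (auto simp: hd_conv_nth)
  next
    case (Suc i') then show ?thesis using i unfolding path_edge_def by auto
  qed
next
  assume h: "(xs \<noteq> [] \<and> ((a = x \<and> hd xs = y) \<or> (a = y \<and> hd xs = x))) \<or> path_edge xs x y"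
  show "path_edge (a # xs) x y"
  proof (cases "path_edge xs x y")
    case True
    then obtain i where "Suc i < length xs"
     "(xs ! i = x \<and> xs ! Suc i = y) \<or> (xs ! i = y \<and> xs ! Suc i = x)"
      unfolding path_edge_def by blast
    then show ?thesis unfolding path_edge_def by (intro exI[of _ "Suc i"]) auto
  next
    case False
    then show ?thesis using h unfolding path_edge_def by (intro exI[of _ 0]) (auto simp: hd_conv_nth)
  qed
qed

lemma pe_set: "path_edge xs x y \<Longrightarrow> x \<in> set xs \<and> y \<in> set xs"
  unfolding path_edge_def by (metis Suc_lessD nth_mem)

lemma lk_shift:
  assumes t: "is_tree V E" and P: "is_path V E P i j" and ij: "i \<noteq> j" and P1: "P ! 1 = u"
    and iA: "i \<in> A" and un: "is_node V E A u"
  shows "lk V E A wt u j = wt u i * lk V E A wt i j"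
proof -
  have lP: "length P \<ge> 2" using path_len2[OF P ij] .
  have gP: "geod V E i j = P" using geod_eq[OF t P] .
  have Pc: "P = i # tl P" using P unfolding is_path_def by (metis list.collapse)
  have tlne: "tl P \<noteq> []" using lP by (metis Pc One_nat_def Suc_1 le_Suc_eq length_Cons list.size(3) not_less_eq_eq)
  have htl: "hd (tl P) = u" using P1 tlne by (metis Pc hd_conv_nth nth_Cons_Suc One_nat_def)
  have T: "is_path V E (tl P) u j" using path_drop[OF P, of 1] lP P1 by (simp add: drop_Suc)
  have gT: "geod V E u j = tl P" using geod_eq[OF t T] .
  have iT: "i \<notin> set (tl P)" using P Pc unfolding is_path_def by (metis distinct.simps(2))
  have inode: "\<not> is_node V E A i" using iA unfolding is_node_def by simp
  define N where "N = {x \<in> set (tl P). is_node V E A x}"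
  have N: "{x \<in> set P. is_node V E A x} = N" unfolding N_def using inode
    by (subst Pc) auto
  have fN: "finite N" unfolding N_def by simp
  have uN: "u \<in> N" unfolding N_def using un htl tlne by (metis hd_in_set mem_Collect_eq)
  define F where "F = (\<lambda>x. \<Prod>y \<in> {y. E x y \<and> \<not> path_edge P x y}. wt x y)"
  define G where "G = (\<lambda>x. \<Prod>y \<in> {y. E x y \<and> \<not> path_edge (tl P) x y}. wt x y)"
  have pe: "\<And>x y. path_edge P x y \<longleftrightarrow> (x = i \<and> y = u) \<or> (x = u \<and> y = i) \<or> path_edge (tl P) x y"
    using pe_cons[of i "tl P"] Pc tlne htl by (metis)
  have FG: "F x = G x" if "x \<in> N - {u}" for x
  proof -
    have "x \<noteq> i" "x \<noteq> u" using that iT unfolding N_def by auto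
    then have "{y. E x y \<and> \<not> path_edge P x y} = {y. E x y \<and> \<not> path_edge (tl P) x y}" using pe by auto
    then show ?thesis unfolding F_def G_def by simp
  qed
  have fin: "finite {y. E u y \<and> \<not> path_edge P u y}"
  proof (rule finite_subset[of _ V])
    show "{y. E u y \<and> \<not> path_edge P u y} \<subseteq> V" using tree_E[OF t] by auto
    show "finite V" using t unfolding is_tree_def by simp
  qed
  have set_u: "{y. E u y \<and> \<not> path_edge (tl P) u y} = insert i {y. E u y \<and> \<not> path_edge P u y}"
  proof -
    have "E u i" using P P1 lP Pc unfolding is_path_def
      by (metis One_nat_def Suc_1 Suc_le_lessD nth_Cons_0 tree_E[OF t])
    moreover have "\<not> path_edge (tl P) u i" using pe_set iT by metis
    ultimately show ?thesis using pe by auto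
  qed
  have Gu: "G u = wt u i * F u"
  proof -
    have "i \<notin> {y. E u y \<and> \<not> path_edge P u y}" using pe by auto
    then show ?thesis unfolding G_def F_def set_u using fin by simp
  qed
  have "lk V E A wt u j = prod G N" unfolding lk_def gT G_def N_def by simp
  also have "\<dots> = G u * prod G (N - {u})" using prod.remove[OF fN uN] .
  also have "prod G (N - {u}) = prod F (N - {u})" using FG by (metis prod.cong)
  also have "G u * prod F (N - {u}) = wt u i * (F u * prod F (N - {u}))" using Gu by simp
  also have "F u * prod F (N - {u}) = prod F N" using prod.remove[OF fN uN, of F] by simp
  also have "prod F N = lk V E A wt i j" unfolding lk_def gP F_def N[symmetric] by simp
  finally show ?thesis .
qed

theorem lemma3p16:
  fixes V :: "'v set" and E :: "'v \<Rightarrow> 'v \<Rightarrow> bool" and rt :: 'v and A :: "'v set"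
    and wt :: "'v \<Rightarrow> 'v \<Rightarrow> int" and n :: "'v \<Rightarrow> int"
  assumes diag: "EN_diagram V E rt A"
    and near_pos: "\<And>v x. is_node V E A v \<Longrightarrow> E v x \<Longrightarrow> \<not> is_far_edge V E rt v x \<Longrightarrow> wt v x > 0"
    and far_nz: "\<And>v. is_node V E A v \<Longrightarrow> v \<noteq> rt \<Longrightarrow> far_weight V E rt wt v \<noteq> 0"
    and far_neg: "\<And>v w. is_node V E A v \<Longrightarrow> v \<noteq> rt \<Longrightarrow> far_weight V E rt wt v < 0 \<Longrightarrow>
                    is_node V E A w \<Longrightarrow> w \<noteq> v \<Longrightarrow> beyond V E rt w v \<Longrightarrow>
                    far_weight V E rt wt w < 0"
    and mult_pos: "\<And>v. v \<in> V \<Longrightarrow> mult V E A wt n v > 0"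
    and two: "card A \<ge> 2"
  shows "\<forall>i\<in>A. self_lk V E A wt n i < 0"
proof
  fix i assume iA: "i \<in> A"
  have t: "is_tree V E" and AV: "A \<subseteq> V" and rtV: "rt \<in> V" and val1: "\<And>a. a \<in> A \<Longrightarrow> valency E a = 1"
    using diag unfolding EN_diagram_def by auto
  have finV: "finite V" using t unfolding is_tree_def by simp
  have finA: "finite A" using finite_subset[OF AV finV] .
  have npos: "n j > 0" if "j \<in> A" for j
  proof -
    have "j \<in> V" using that AV by auto
    then have "mult V E A wt n j > 0" by (rule mult_pos)
    then show ?thesis using that unfolding mult_def by simp
  qed
  have finnb: "\<And>v. finite (nbrs E v)"
    using finite_subset[OF _ finV] tree_E[OF t] unfolding nbrs_def by (metis mem_Collect_eq subsetI)
  obtain u where nb: "nbrs E i = {u}" using val1[OF iA] unfolding valency_def by (metis card_1_singletonE)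
  have Eiu: "E i u" using nb unfolding nbrs_def by auto
  have Eonly: "\<And>y. E i y \<Longrightarrow> y = u" using nb unfolding nbrs_def by auto
  have inode: "\<not> is_node V E A i" using iA unfolding is_node_def by simp
  have iV: "i \<in> V" using iA AV by auto
  have uV: "u \<in> V" using tree_E[OF t Eiu] by simp
  have ui: "u \<noteq> i" using tree_E[OF t Eiu] by auto
  define S where "S = (\<Sum>j\<in>A-{i}. n j * lk V E A wt i j)"
  have ne: "A - {i} \<noteq> {}"
  proof
    assume "A - {i} = {}"
    then have "A \<subseteq> {i}" by auto
    then have "card A \<le> 1" using card_mono[of "{i}" A] by simp
    then show False using two by simp
  qed
  have Pj: "is_path V E (geod V E i j) i j \<and> geod V E i j ! 1 = u \<and> length (geod V E i j) \<ge> 2"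
    if j: "j \<in> A - {i}" for j
  proof -
    have jV: "j \<in> V" using j AV by auto
    let ?P = "geod V E i j"
    have P: "is_path V E ?P i j" using geod_path[OF t iV jV] .
    have l: "length ?P \<ge> 2" using path_len2[OF P] j by auto
    have "E (?P ! 0) (?P ! 1)" using P l unfolding is_path_def by auto
    moreover have "?P ! 0 = i" using P unfolding is_path_def by (metis hd_conv_nth)
    ultimately show ?thesis using Eonly P l by auto
  qed
  have "S > 0"
  proof (cases "is_node V E A u \<and> u \<noteq> rt \<and> rt \<noteq> i \<and> far_weight V E rt wt u < 0")
    case True
    then have un: "is_node V E A u" and urt: "u \<noteq> rt" and rti: "rt \<noteq> i" and fwu: "far_weight V E rt wt u < 0"
      by auto
    define G where "G = geod V E u rt"
    have G: "is_path V E G u rt" unfolding G_def using geod_path[OF t uV rtV] .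
    have lG: "length G \<ge> 2" using path_len2[OF G urt] .
    define f where "f = far_nb V E rt u"
    have fG: "f = G ! 1" unfolding f_def far_nb_def G_def by simp
    have G0: "G ! 0 = u" using G unfolding is_path_def by (metis hd_conv_nth)
    have Euf: "E u f" using G lG G0 fG unfolding is_path_def by (metis One_nat_def Suc_1 Suc_le_lessD)
    have fi: "f \<noteq> i"
    proof
      assume fi: "f = i"
      show False
      proof (cases "length G = 2")
        case True
        then have "last G = G ! 1" by (subst last_conv_nth) auto
        then show False using G fi fG rti unfolding is_path_def by simp
      next
        case False
        then have l3: "length G \<ge> 3" using lG by simp
        have eG: "\<forall>i. Suc i < length G \<longrightarrow> E (G ! i) (G ! Suc i)" using G unfolding is_path_def by simp
        have "E (G ! 1) (G ! Suc 1)" using eG[rule_format, of 1] l3 by simp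
        then have "E (G ! 1) (G ! 2)" by (simp add: numeral_2_eq_2)
        then have "G ! 2 = u" using Eonly fi fG by simp
        then have "G ! 2 = G ! 0" using G0 by simp
        moreover have "distinct G" using G unfolding is_path_def by simp
        moreover have "(2::nat) < length G" "(0::nat) < length G" using l3 by auto
        ultimately show False using nth_eq_iff_index_eq[of G 2 0] by auto
      qed
    qed
    have wui: "wt u i > 0"
      proof (rule near_pos[OF un])
      show "E u i" using tree_E[OF t Eiu] by simp
      show "\<not> is_far_edge V E rt u i" using fi unfolding is_far_edge_def f_def by simp
    qed
    have lkui: "lk V E A wt u i < 0"
    proof -
      have "E u i" using tree_E[OF t Eiu] by simp
      then have gui: "geod V E u i = [u, i]" using geod_eq[OF t path_two[OF t]] by simp
      have nodes: "{x \<in> set [u, i]. is_node V E A x} = {u}" using un inode by auto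
      have pe: "path_edge [u, i] u y \<longleftrightarrow> y = i" for y using pe_cons[of u "[i]" u y] ui
        by (auto simp: path_edge_def)
      define Y where "Y = {y. E u y \<and> \<not> path_edge [u, i] u y}"
      have finY: "finite Y" using finnb[of u] unfolding Y_def nbrs_def by (simp add: finite_subset[of _ "{y. E u y}"])
      have fY: "f \<in> Y" unfolding Y_def using Euf fi pe by simp
      have lk: "lk V E A wt u i = wt u f * (\<Prod>y\<in>Y - {f}. wt u y)"
        proof -
        have "lk V E A wt u i = prod (wt u) Y" unfolding lk_def gui nodes Y_def by simp
        then show ?thesis using prod.remove[OF finY fY, of "wt u"] by simp
      qed
      have "(\<Prod>y\<in>Y - {f}. wt u y) > 0"
      proof (rule prod_pos)
        fix y assume "y \<in> Y - {f}"
        then have "E u y" "y \<noteq> f" unfolding Y_def by auto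
        then show "wt u y > 0" using near_pos[OF un] unfolding is_far_edge_def f_def by metis
      qed
      moreover have "wt u f < 0" using fwu unfolding far_weight_def f_def by simp
      ultimately show ?thesis unfolding lk using mult_neg_pos by blast
    qed
    have uA: "u \<notin> A" using un unfolding is_node_def by simp
    have "mult V E A wt n u = (\<Sum>j\<in>A. n j * lk V E A wt u j)" unfolding mult_def using uA by simp
    also have "\<dots> = n i * lk V E A wt u i + (\<Sum>j\<in>A-{i}. n j * lk V E A wt u j)"
      using sum.remove[OF finA iA] by simp
    also have "(\<Sum>j\<in>A-{i}. n j * lk V E A wt u j) = (\<Sum>j\<in>A-{i}. wt u i * (n j * lk V E A wt i j))"
    proof (rule sum.cong)
      fix j assume j: "j \<in> A - {i}"
      have "lk V E A wt u j = wt u i * lk V E A wt i j"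
        using lk_shift[OF t, of "geod V E i j" i j u A wt] Pj[OF j] j iA un by auto
      then show "n j * lk V E A wt u j = wt u i * (n j * lk V E A wt i j)" by simp
    qed simp
    also have "\<dots> = wt u i * S" unfolding S_def by (simp add: sum_distrib_left)
    finally have "n i * lk V E A wt u i + wt u i * S > 0" using mult_pos[OF uV] by simp
    moreover have "n i * lk V E A wt u i < 0" using npos[OF iA] lkui mult_pos_neg by blast
    ultimately have "wt u i * S > 0" by simp
    then show ?thesis using wui zero_less_mult_pos by blast
  next
    case False
    have "lk V E A wt i j > 0" if j: "j \<in> A - {i}" for j
    proof -
      let ?P = "geod V E i j"
      have P: "is_path V E ?P i j" and P1: "?P ! 1 = u" and lP: "length ?P \<ge> 2" using Pj[OF j] by auto
      have P0: "?P ! 0 = i" using P unfolding is_path_def by (metis hd_conv_nth)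
      show ?thesis unfolding lk_def
      proof (rule prod_pos, rule prod_pos)
        fix x y assume x: "x \<in> {x \<in> set ?P. is_node V E A x}" and y: "y \<in> {y. E x y \<and> \<not> path_edge ?P x y}"
        have xn: "is_node V E A x" and Exy: "E x y" and npe: "\<not> path_edge ?P x y" using x y by auto
        show "wt x y > 0"
        proof (cases "is_far_edge V E rt x y")
          case False then show ?thesis using near_pos[OF xn Exy] by simp
        next
          case True
          then have xrt: "x \<noteq> rt" and yf: "y = far_nb V E rt x" unfolding is_far_edge_def by auto
          have "\<not> far_weight V E rt wt x < 0"
          proof
            assume fwx: "far_weight V E rt wt x < 0"
            obtain k where k: "k < length ?P" "?P ! k = x" using x by (auto simp: in_set_conv_nth)
            have k0: "k \<noteq> 0"
            proof
              assume "k = 0"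
              then have "x = i" using k P0 by simp
              then show False using xn inode by simp
            qed
            have nepe: "\<not> path_edge ?P (?P ! k) (geod V E (?P ! k) rt ! 1)"
              using npe yf k unfolding far_nb_def by simp
            have x0: "x \<in> set (geod V E i rt)"
              using beyond_aux[OF t P k(1) _ _ rtV nepe, of 0] k xrt P0 by simp
            have x1: "x \<in> set (geod V E u rt)"
              using beyond_aux[OF t P k(1) _ _ rtV nepe, of 1] k k0 xrt P1 by simp
            have rti: "rt \<noteq> i"
            proof
              assume "rt = i"
              then have "geod V E i rt = [i]" using geod_eq[OF t path_single[OF iV]] by simp
              then show False using x0 xn inode by simp
            qed
            have urt: "u \<noteq> rt"
            proof
              assume "u = rt"
              then have "geod V E u rt = [u]" using geod_eq[OF t path_single[OF uV]] by simp
              then show False using x1 xrt \<open>u = rt\<close> by simp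
            qed
            have "is_node V E A u \<and> far_weight V E rt wt u < 0"
            proof (cases "x = u")
              case True then show ?thesis using xn fwx by simp
            next
              case False
              then have k2: "k \<ge> 2" using k k0 P1 by (metis One_nat_def Suc_1 Suc_leI less_one nat_neq_iff)
              have e01: "E (?P ! 0) (?P ! 1)" and e12: "E (?P ! 1) (?P ! 2)"
                using P k k2 lP unfolding is_path_def by (auto simp: numeral_2_eq_2)
              have d: "?P ! 0 \<noteq> ?P ! 2" using P k k2 unfolding is_path_def
                by (simp add: nth_eq_iff_index_eq)
              have "{?P ! 0, ?P ! 2} \<subseteq> nbrs E u" using e01 e12 P1 tree_E[OF t] unfolding nbrs_def by auto
              then have "card {?P ! 0, ?P ! 2} \<le> card (nbrs E u)" using finnb card_mono by metis
              then have "valency E u \<ge> 2" using d unfolding valency_def by simp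
              then have un: "is_node V E A u" using uV val1 unfolding is_node_def by fastforce
              have "far_weight V E rt wt u < 0"
                using far_neg[OF xn xrt fwx un] False x1 unfolding beyond_def by metis
              then show ?thesis using un by simp
            qed
            then show False using False urt rti by simp
          qed
          moreover have "far_weight V E rt wt x \<noteq> 0" using far_nz[OF xn xrt] .
          ultimately show ?thesis using yf unfolding far_weight_def by simp
        qed
      qed
    qed
    then show ?thesis unfolding S_def using finA ne npos
      by (intro sum_pos) (auto intro: mult_pos_pos)
  qed
  then show "self_lk V E A wt n i < 0" unfolding self_lk_def S_def[symmetric]
    using npos[OF iA] by (simp add: divide_neg_pos)
qed

end
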